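(* Let $\gamma>0$ and let $\mathcal{L}$ be the qubit Lindbladian with no Hamiltonian part and a single jump operator $L=\sqrt{\gamma}\,|0\rangle\langle 1|$, i.e. $\mathcal{L}(\rho)=L\rho L^\dagger-\frac12\{L^\dagger L,\rho\}$. Then $\mathcal{L}$ is not quantum programmable.
   Context: $\mathcal{L}$ generates the amplitude-damping semigroup $(e^{t\mathcal{L}})_{t\ge0}$. $\mathcal{L}$ is quantum programmable if there exist a finite-dimensional program space $\mathcal{H}_P$, a CPTP map $\mathcal{P}$ from operators on $\mathbb{C}^2\otimes\mathcal{H}_P$ to operators on $\mathbb{C}^2$, and a continuous family of density operators $(\pi_t)_{t\ge0}$ on $\mathcal{H}_P$ such that $\mathcal{P}(\rho\otimes\pi_t)=e^{t\mathcal{L}}(\rho)$ for all $t\ge0$ and all $\rho$. *)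

theory Defs
  imports Complex_Main "Jordan_Normal_Form.Matrix"
begin

text \<open>Operators on C^n are n x n complex matrices. The tensor product
C^2 (x) C^d is identified with C^(2d) via the basis ordering |i> (x) |a> = e_(i*d+a).\<close>

definition dagger :: "complex mat \<Rightarrow> complex mat" where
  "dagger A = mat (dim_col A) (dim_row A) (\<lambda>(i,j). cnj (A $$ (j,i)))"

definition mtrace :: "complex mat \<Rightarrow> complex" where
  "mtrace A = (\<Sum>i<dim_row A. A $$ (i,i))"

definition psd :: "nat \<Rightarrow> complex mat \<Rightarrow> bool" where
  "psd n A \<longleftrightarrow> A \<in> carrier_mat n n \<and>
     (\<forall>v :: nat \<Rightarrow> complex. let q = (\<Sum>i<n. \<Sum>j<n. cnj (v i) * A $$ (i,j) * v j)
        in Im q = 0 \<and> 0 \<le> Re q)"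

definition density :: "nat \<Rightarrow> complex mat \<Rightarrow> bool" where
  "density n A \<longleftrightarrow> psd n A \<and> mtrace A = 1"

definition kron :: "complex mat \<Rightarrow> complex mat \<Rightarrow> complex mat" where
  "kron A B = mat (dim_row A * dim_row B) (dim_col A * dim_col B)
     (\<lambda>(i,j). A $$ (i div dim_row B, j div dim_col B) * B $$ (i mod dim_row B, j mod dim_col B))"

text \<open>(id_k (x) Phi) for Phi mapping n x n to m x m matrices; the ancilla C^k
is the first tensor factor, so a (k n) x (k n) matrix is a k x k array of n x n blocks.\<close>
definition ampliate :: "nat \<Rightarrow> nat \<Rightarrow> nat \<Rightarrow> (complex mat \<Rightarrow> complex mat) \<Rightarrow> complex mat \<Rightarrow> complex mat" where
  "ampliate k n m \<Phi> X = mat (k*m) (k*m) (\<lambda>(i,j).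
     \<Phi> (mat n n (\<lambda>(p,q). X $$ ((i div m) * n + p, (j div m) * n + q))) $$ (i mod m, j mod m))"

definition CPTP :: "nat \<Rightarrow> nat \<Rightarrow> (complex mat \<Rightarrow> complex mat) \<Rightarrow> bool" where
  "CPTP n m \<Phi> \<longleftrightarrow>
     (\<forall>A\<in>carrier_mat n n. \<Phi> A \<in> carrier_mat m m) \<and>
     (\<forall>A\<in>carrier_mat n n. \<forall>B\<in>carrier_mat n n. \<Phi> (A + B) = \<Phi> A + \<Phi> B) \<and>
     (\<forall>c. \<forall>A\<in>carrier_mat n n. \<Phi> (c \<cdot>\<^sub>m A) = c \<cdot>\<^sub>m \<Phi> A) \<and>
     (\<forall>A\<in>carrier_mat n n. mtrace (\<Phi> A) = mtrace A) \<and>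
     (\<forall>k X. psd (k*n) X \<longrightarrow> psd (k*m) (ampliate k n m \<Phi> X))"

definition jump :: "real \<Rightarrow> complex mat" where
  "jump \<gamma> = mat 2 2 (\<lambda>(i,j). if i = 0 \<and> j = 1 then complex_of_real (sqrt \<gamma>) else 0)"

definition lindbladian :: "real \<Rightarrow> complex mat \<Rightarrow> complex mat" where
  "lindbladian \<gamma> \<rho> =
     jump \<gamma> * \<rho> * dagger (jump \<gamma>)
     - (1/2 :: complex) \<cdot>\<^sub>m (dagger (jump \<gamma>) * jump \<gamma> * \<rho> + \<rho> * (dagger (jump \<gamma>) * jump \<gamma>))"

definition amp_damp_semigroup :: "real \<Rightarrow> real \<Rightarrow> complex mat \<Rightarrow> complex mat" where
  "amp_damp_semigroup \<gamma> t \<rho> = mat 2 2 (\<lambda>(i,j).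
     \<Sum>n. (complex_of_real t ^ n / of_nat (fact n)) * (((lindbladian \<gamma>) ^^ n) \<rho> $$ (i,j)))"

definition quantum_programmable :: "(real \<Rightarrow> complex mat \<Rightarrow> complex mat) \<Rightarrow> bool" where
  "quantum_programmable T \<longleftrightarrow>
     (\<exists>(d::nat) (P :: complex mat \<Rightarrow> complex mat) (\<pi> :: real \<Rightarrow> complex mat).
        CPTP (2*d) 2 P \<and>
        (\<forall>t\<ge>0. density d (\<pi> t)) \<and>
        (\<forall>i<d. \<forall>j<d. continuous_on {0..} (\<lambda>t. \<pi> t $$ (i,j))) \<and>
        (\<forall>t\<ge>0. \<forall>\<rho>. density 2 \<rho> \<longrightarrow> P (kron \<rho> (\<pi> t)) = T t \<rho>))"

end

theory Submission imports Defs "Jordan_Normal_Form.Char_Poly" begin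

lemma sum2: "(\<Sum>i<2. f i) = f 0 + f (1::nat)" for f :: "nat \<Rightarrow> 'a::comm_monoid_add"
  by (simp add: numeral_2_eq_2)

lemma sum2': "(\<Sum>i=0..<2. f i) = f 0 + f (1::nat)" for f :: "nat \<Rightarrow> 'a::comm_monoid_add"
  by (simp add: numeral_2_eq_2)

lemma mult2: assumes "A \<in> carrier_mat 2 2" "B \<in> carrier_mat 2 2"
  shows "A * B = mat 2 2 (\<lambda>(i,j). A$$(i,0)*B$$(0,j) + A$$(i,1)*B$$(1,j))"
  apply (rule eq_matI) using assms by (auto simp: scalar_prod_def sum2')

lemma less2: "(i::nat) < 2 \<longleftrightarrow> i = 0 \<or> i = 1" by auto

lemma lind_formula:
  assumes g: "\<gamma> \<ge> 0" and r: "\<rho> \<in> carrier_mat 2 2"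
  shows "lindbladian \<gamma> \<rho> = mat 2 2 (\<lambda>(i,j). if i=0 \<and> j=0 then of_real \<gamma> * \<rho>$$(1,1)
      else if i=1 \<and> j=1 then - of_real \<gamma> * \<rho>$$(1,1) else - (of_real \<gamma>/2) * \<rho>$$(i,j))"
proof -
  have sq: "complex_of_real (sqrt \<gamma>) * complex_of_real (sqrt \<gamma>) = of_real \<gamma>"
    using g by (simp flip: of_real_mult)
  define s where "s = complex_of_real (sqrt \<gamma>)"
  have J: "jump \<gamma> = mat 2 2 (\<lambda>(i,j). if i = 0 \<and> j = 1 then s else 0)" 
    unfolding jump_def s_def by simp
  have D: "dagger (jump \<gamma>) = mat 2 2 (\<lambda>(i,j). if i = 1 \<and> j = 0 then s else 0)"
    unfolding J dagger_def s_def by (rule eq_matI) auto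
  have JJ: "dagger (jump \<gamma>) * jump \<gamma> = mat 2 2 (\<lambda>(i,j). if i = 1 \<and> j = 1 then of_real \<gamma> else 0)"
    unfolding D unfolding J by (subst mult2) (auto simp: sq[folded s_def] intro!: eq_matI)
  have A: "jump \<gamma> * \<rho> * dagger (jump \<gamma>) = mat 2 2 (\<lambda>(i,j). if i = 0 \<and> j = 0 then of_real \<gamma> * \<rho>$$(1,1) else 0)"
    unfolding D unfolding J using r by (subst mult2, force, force, subst mult2) (auto simp: sq[folded s_def] intro!: eq_matI)
  have B: "dagger (jump \<gamma>) * jump \<gamma> * \<rho> = mat 2 2 (\<lambda>(i,j). if i = 1 then of_real \<gamma> * \<rho>$$(1,j) else 0)"
    unfolding JJ using r by (subst mult2) (auto intro!: eq_matI)
  have C: "\<rho> * (dagger (jump \<gamma>) * jump \<gamma>) = mat 2 2 (\<lambda>(i,j). if j = 1 then of_real \<gamma> * \<rho>$$(i,1) else 0)"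
    unfolding JJ using r by (subst mult2) (auto intro!: eq_matI)
  show ?thesis unfolding lindbladian_def A B C
    by (rule eq_matI) (auto simp: less2)
qed

definition Lpow :: "real \<Rightarrow> nat \<Rightarrow> complex mat \<Rightarrow> complex mat" where
  "Lpow \<gamma> n \<rho> = mat 2 2 (\<lambda>(i,j). if i=0 \<and> j=0 then (if n=0 then \<rho>$$(0,0)+\<rho>$$(1,1) else 0) - (- of_real \<gamma>)^n*\<rho>$$(1,1)
     else if i=1 \<and> j=1 then (- of_real \<gamma>)^n*\<rho>$$(1,1) else (- of_real \<gamma>/2)^n * \<rho>$$(i,j))"

lemma Lpow_carrier: "Lpow \<gamma> n \<rho> \<in> carrier_mat 2 2" unfolding Lpow_def by simp

lemma lind_pow:
  assumes g: "\<gamma> \<ge> 0" and r: "\<rho> \<in> carrier_mat 2 2"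
  shows "(lindbladian \<gamma> ^^ n) \<rho> = Lpow \<gamma> n \<rho>"
proof (induction n)
  case 0
  show ?case using r unfolding Lpow_def by (auto intro!: eq_matI simp: less2)
next
  case (Suc n)
  show ?case unfolding funpow.simps comp_def Suc lind_formula[OF g Lpow_carrier]
    unfolding Lpow_def by (rule eq_matI) (auto simp: less2 algebra_simps)
qed

lemma ser_exp: "(\<lambda>n. (complex_of_real t ^ n / of_nat (fact n)) * (c * x^n)) sums (c * exp (of_real t * x))"
proof -
  have "(\<lambda>n. (of_real t * x)^n /\<^sub>R fact n) sums exp(of_real t * x)" by (rule exp_converges)
  hence "(\<lambda>n. c * ((of_real t * x)^n /\<^sub>R fact n)) sums (c * exp(of_real t * x))" by (rule sums_mult)
  moreover have "(\<lambda>n. c * ((of_real t * x)^n /\<^sub>R fact n)) = (\<lambda>n. (complex_of_real t ^ n / of_nat (fact n)) * (c * x^n))"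
    by (rule ext) (simp add: scaleR_conv_of_real power_mult_distrib divide_inverse)
  ultimately show ?thesis by simp
qed

lemma ser_one: "(\<lambda>n. (complex_of_real t ^ n / of_nat (fact n)) * (if n = 0 then a else 0)) sums a"
proof -
  have "(\<lambda>n. (complex_of_real t ^ n / of_nat (fact n)) * (if n = 0 then a else 0)) = (\<lambda>n. if n = 0 then a else 0)"
    by (rule ext) auto
  thus ?thesis using sums_single[of 0 "\<lambda>_. a"] by simp
qed

lemma semigroup_formula:
  assumes g: "\<gamma> \<ge> 0" and r: "\<rho> \<in> carrier_mat 2 2"
  shows "amp_damp_semigroup \<gamma> t \<rho> = mat 2 2 (\<lambda>(i,j).
     if i=0 \<and> j=0 then \<rho>$$(0,0) + \<rho>$$(1,1) - of_real (exp (-\<gamma>*t)) * \<rho>$$(1,1)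
     else if i=1 \<and> j=1 then of_real (exp (-\<gamma>*t)) * \<rho>$$(1,1)
     else of_real (exp (-\<gamma>*t/2)) * \<rho>$$(i,j))"
proof -
  have e1: "exp (complex_of_real t * (- of_real \<gamma>)) = of_real (exp (-\<gamma>*t))"
    by (simp flip: exp_of_real add: mult.commute)
  have e2: "exp (complex_of_real t * (- of_real \<gamma>/2)) = of_real (exp (-\<gamma>*t/2))"
    by (simp flip: exp_of_real add: mult.commute)
  have s00: "(\<lambda>n. (complex_of_real t ^ n / of_nat (fact n)) * Lpow \<gamma> n \<rho> $$ (0,0)) sums
     (\<rho>$$(0,0) + \<rho>$$(1,1) - of_real (exp (-\<gamma>*t)) * \<rho>$$(1,1))"
  proof -
    have "(\<lambda>n. (complex_of_real t ^ n / of_nat (fact n)) * (if n = 0 then \<rho>$$(0,0) + \<rho>$$(1,1) else 0)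
       - (complex_of_real t ^ n / of_nat (fact n)) * (\<rho>$$(1,1) * (- of_real \<gamma>)^n)) sums
       (\<rho>$$(0,0) + \<rho>$$(1,1) - \<rho>$$(1,1) * exp (complex_of_real t * (- of_real \<gamma>)))"
      by (intro sums_diff ser_one ser_exp)
    thus ?thesis unfolding e1 Lpow_def by (simp add: algebra_simps)
  qed
  have s11: "(\<lambda>n. (complex_of_real t ^ n / of_nat (fact n)) * Lpow \<gamma> n \<rho> $$ (1,1)) sums
     (of_real (exp (-\<gamma>*t)) * \<rho>$$(1,1))"
    using ser_exp[of t "\<rho>$$(1,1)" "- of_real \<gamma>"] unfolding e1 Lpow_def by (simp add: algebra_simps)
  have sij: "(\<lambda>n. (complex_of_real t ^ n / of_nat (fact n)) * Lpow \<gamma> n \<rho> $$ (i,j)) sums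
     (of_real (exp (-\<gamma>*t/2)) * \<rho>$$(i,j))" if "i < 2" "j < 2" "\<not> (i=0 \<and> j=0)" "\<not> (i=1 \<and> j=1)" for i j
  proof -
    have "Lpow \<gamma> n \<rho> $$ (i,j) = \<rho>$$(i,j) * (- of_real \<gamma>/2)^n" for n
      using that unfolding Lpow_def by auto
    thus ?thesis using ser_exp[of t "\<rho>$$(i,j)" "- of_real \<gamma>/2"] unfolding e2 by (simp add: mult.commute)
  qed
  show ?thesis
    unfolding amp_damp_semigroup_def lind_pow[OF g r]
    apply (rule eq_matI)
    using sums_unique[OF s00, symmetric] sums_unique[OF s11, symmetric] sums_unique[OF sij, symmetric]
    by auto
qed

definition unit :: "nat \<Rightarrow> nat \<Rightarrow> nat \<Rightarrow> complex mat" where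
  "unit n r r' = mat n n (\<lambda>(p,q). if p = r \<and> q = r' then 1 else 0)"

lemma unit_carrier[simp]: "unit n r r' \<in> carrier_mat n n" unfolding unit_def by simp
lemma unit_dim[simp]: "dim_row (unit n r r') = n" "dim_col (unit n r r') = n" unfolding unit_def by simp_all

definition restr :: "nat \<Rightarrow> (nat \<times> nat) set \<Rightarrow> complex mat \<Rightarrow> complex mat" where
  "restr n S A = mat n n (\<lambda>(p,q). if (p,q) \<in> S then A$$(p,q) else 0)"

lemma CPTP_D:
  assumes "CPTP n m P"
  shows "\<And>A. A \<in> carrier_mat n n \<Longrightarrow> P A \<in> carrier_mat m m"
    and "\<And>A B. A \<in> carrier_mat n n \<Longrightarrow> B \<in> carrier_mat n n \<Longrightarrow> P (A + B) = P A + P B"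
    and "\<And>c A. A \<in> carrier_mat n n \<Longrightarrow> P (c \<cdot>\<^sub>m A) = c \<cdot>\<^sub>m P A"
    and "\<And>A. A \<in> carrier_mat n n \<Longrightarrow> mtrace (P A) = mtrace A"
    and "\<And>k X. psd (k*n) X \<Longrightarrow> psd (k*m) (ampliate k n m P X)"
  using assms unfolding CPTP_def by blast+

lemma P_restr:
  assumes P: "CPTP n m P" and i: "i < m" and j: "j < m" and S: "finite S" "S \<subseteq> {..<n} \<times> {..<n}"
  shows "P (restr n S A) $$ (i,j) = (\<Sum>(p,q)\<in>S. A$$(p,q) * P (unit n p q) $$ (i,j))"
  using S
proof (induction S rule: finite_induct)
  case empty
  have "restr n {} A = 0 \<cdot>\<^sub>m (0\<^sub>m n n)" unfolding restr_def by (rule eq_matI) auto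
  moreover have "P (0 \<cdot>\<^sub>m (0\<^sub>m n n)) = 0 \<cdot>\<^sub>m P (0\<^sub>m n n)" by (rule CPTP_D(3)[OF P]) simp
  ultimately have "P (restr n {} A) = 0 \<cdot>\<^sub>m P (0\<^sub>m n n)" by simp
  moreover have "P (0\<^sub>m n n) \<in> carrier_mat m m" using CPTP_D(1)[OF P] by simp
  ultimately show ?case using i j by simp
next
  case (insert e S)
  obtain p q where e: "e = (p,q)" by force
  have pq: "p < n" "q < n" using insert e by auto
  have "restr n (insert e S) A = restr n S A + A$$(p,q) \<cdot>\<^sub>m unit n p q"
    unfolding restr_def unit_def e using insert(2) e by (intro eq_matI) auto
  hence "P (restr n (insert e S) A) = P (restr n S A) + A$$(p,q) \<cdot>\<^sub>m P (unit n p q)"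
    using CPTP_D(2,3)[OF P] by (simp add: restr_def)
  moreover have "P (unit n p q) \<in> carrier_mat m m" "P (restr n S A) \<in> carrier_mat m m"
    using CPTP_D(1)[OF P] by (auto simp: restr_def)
  ultimately show ?case using i j insert e by simp
qed

lemma P_entry:
  assumes P: "CPTP n m P" and A: "A \<in> carrier_mat n n" and i: "i < m" and j: "j < m"
  shows "P A $$ (i,j) = (\<Sum>p<n. \<Sum>q<n. A$$(p,q) * P (unit n p q) $$ (i,j))"
proof -
  have "restr n ({..<n} \<times> {..<n}) A = A" unfolding restr_def using A by (intro eq_matI) auto
  hence "P A $$ (i,j) = (\<Sum>(p,q)\<in>{..<n} \<times> {..<n}. A$$(p,q) * P (unit n p q) $$ (i,j))"
    using P_restr[OF P i j, of "{..<n} \<times> {..<n}" A] by simp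
  thus ?thesis by (simp add: sum.cartesian_product)
qed

definition qf :: "nat \<Rightarrow> complex mat \<Rightarrow> (nat \<Rightarrow> complex) \<Rightarrow> complex" where
  "qf N Q v = (\<Sum>i<N. \<Sum>j<N. cnj (v i) * Q $$ (i,j) * v j)"

lemma psd_qf: "psd N Q \<Longrightarrow> Im (qf N Q v) = 0 \<and> 0 \<le> Re (qf N Q v)"
  unfolding psd_def qf_def Let_def by blast

lemma ifz1: "(x::complex) * (if P then y else 0) = (if P then x * y else 0)" by simp
lemma ifz2: "(if P then y else 0) * (x::complex) = (if P then y * x else 0)" by simp
lemma ifz3: "cnj (if P then y else 0) = (if P then cnj y else 0)" by simp

lemma ifsum: "(\<Sum>j\<in>A. if P then f j else (0::complex)) = (if P then \<Sum>j\<in>A. f j else 0)" by simp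

lemma qf_expand:
  assumes I: "I < N"
  shows "qf N Q (\<lambda>j. w j + t * (if j = I then 1 else 0)) = qf N Q w
     + t * (\<Sum>i<N. cnj (w i) * Q $$ (i,I)) + cnj t * (\<Sum>j<N. Q $$ (I,j) * w j) + cnj t * t * Q $$ (I,I)"
proof -
  have "qf N Q (\<lambda>j. w j + t * (if j = I then 1 else 0)) =
     (\<Sum>i<N. \<Sum>j<N. cnj (w i) * Q $$ (i,j) * w j) + (\<Sum>i<N. \<Sum>j<N. cnj (w i) * Q $$ (i,j) * (t * (if j = I then 1 else 0)))
     + (\<Sum>i<N. \<Sum>j<N. cnj (t * (if i = I then 1 else 0)) * Q $$ (i,j) * w j)
     + (\<Sum>i<N. \<Sum>j<N. cnj (t * (if i = I then 1 else 0)) * Q $$ (i,j) * (t * (if j = I then 1 else 0)))"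
    unfolding qf_def by (simp add: algebra_simps sum.distrib)
  also have "\<dots> = qf N Q w
     + t * (\<Sum>i<N. cnj (w i) * Q $$ (i,I)) + cnj t * (\<Sum>j<N. Q $$ (I,j) * w j) + cnj t * t * Q $$ (I,I)"
    unfolding qf_def using I by (simp add: ifz1 ifz2 ifz3 ifsum sum_distrib_left mult.assoc) (simp add: mult_ac)
  finally show ?thesis .
qed

lemma lin_zero:
  fixes x c :: real
  assumes "\<And>e. 0 \<le> e * x + e * e * c"
  shows "x = 0"
proof (rule ccontr)
  assume x: "x \<noteq> 0"
  define e where "e = - x / (2 * (\<bar>c\<bar> + 1))"
  have C: "\<bar>c\<bar> + 1 > 0" by simp
  have "e * x + e * e * c \<le> e * x + e * e * \<bar>c\<bar>"
    by (simp add: mult_left_mono)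
  also have "\<dots> = - x*x / (2 * (\<bar>c\<bar> + 1)) + x * x * \<bar>c\<bar> / (4 * (\<bar>c\<bar> + 1) * (\<bar>c\<bar> + 1))"
    unfolding e_def using C by (simp add: field_simps)
  also have "\<dots> < 0"
  proof -
    have xx: "x * x > 0" using x not_real_square_gt_zero by blast
    have "x * x * \<bar>c\<bar> / (4 * (\<bar>c\<bar> + 1) * (\<bar>c\<bar> + 1)) < x*x / (2 * (\<bar>c\<bar> + 1))"
    proof -
      have "x * x * \<bar>c\<bar> / (4 * (\<bar>c\<bar> + 1) * (\<bar>c\<bar> + 1)) \<le> x * x * (\<bar>c\<bar> + 1) / (4 * (\<bar>c\<bar> + 1) * (\<bar>c\<bar> + 1))"
        using C xx by (intro divide_right_mono mult_left_mono) auto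
      also have "\<dots> = x*x / (4 * (\<bar>c\<bar> + 1))" using C by simp
      also have "\<dots> < x*x / (2 * (\<bar>c\<bar> + 1))" using C xx by (intro divide_strict_left_mono) auto
      finally show ?thesis .
    qed
    thus ?thesis by simp
  qed
  finally show False using assms[of e] by simp
qed

lemma psd_null:
  assumes psd: "psd N Q" and q0: "qf N Q w = 0" and I: "I < N"
  shows "(\<Sum>j<N. Q $$ (I,j) * w j) = 0"
proof -
  define a where "a = (\<Sum>i<N. cnj (w i) * Q $$ (i,I))"
  define b where "b = (\<Sum>j<N. Q $$ (I,j) * w j)"
  define c where "c = Q $$ (I,I)"
  have key: "Im (t * a + cnj t * b + cnj t * t * c) = 0 \<and> 0 \<le> Re (t * a + cnj t * b + cnj t * t * c)" for t
    using psd_qf[OF psd, of "\<lambda>j. w j + t * (if j = I then 1 else 0)"] unfolding qf_expand[OF I] q0 a_def b_def c_def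
    by simp
  have c0: "Im c = 0" using key[of 1] key[of "-1"] by simp
  have r1: "Re a + Re b = 0"
  proof -
    have "0 \<le> e * (Re a + Re b) + e * e * Re c" for e :: real
      using key[of "of_real e"] by (simp add: algebra_simps)
    thus ?thesis by (rule lin_zero)
  qed
  have i1: "Im b - Im a = 0"
  proof -
    have "0 \<le> e * (Im b - Im a) + e * e * Re c" for e :: real
      using key[of "\<i> * of_real e"] by (simp add: algebra_simps)
    thus ?thesis by (rule lin_zero)
  qed
  have i2: "Im a + Im b = 0" using key[of 1] c0 by simp
  have r2: "Re a - Re b = 0" using key[of "\<i>"] c0 by simp
  have "Re b = 0" "Im b = 0" using r1 r2 i1 i2 by linarith+
  thus ?thesis unfolding b_def[symmetric] by (simp add: complex_eq_iff)
qed

lemma sum_group_fn: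
  fixes H c :: "_ \<Rightarrow> complex"
  assumes "finite S" "finite T" "\<And>x. x \<in> S \<Longrightarrow> f x \<in> T"
  shows "(\<Sum>x\<in>S. H (f x) * c x) = (\<Sum>y\<in>T. H y * (\<Sum>x\<in>{x. x \<in> S \<and> f x = y}. c x))"
proof -
  have "(\<Sum>y\<in>T. H y * (\<Sum>x\<in>{x. x \<in> S \<and> f x = y}. c x)) = (\<Sum>y\<in>T. (\<Sum>x\<in>{x. x \<in> S \<and> f x = y}. H (f x) * c x))"
    by (simp add: sum_distrib_left)
  also have "\<dots> = (\<Sum>x\<in>S. H (f x) * c x)"
    using assms by (intro sum.group) auto
  finally show ?thesis by simp
qed

lemma psd_compress:
  assumes A: "psd m A" and f: "\<And>I. I < N \<Longrightarrow> f I < m"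
  shows "psd N (mat N N (\<lambda>(I,J). if g I \<and> g J then A$$(f I, f J) else 0))"
proof -
  let ?X = "mat N N (\<lambda>(I,J). if g I \<and> g J then A$$(f I, f J) else 0)"
  have "Im q = 0 \<and> 0 \<le> Re q" if q: "q = (\<Sum>i<N. \<Sum>j<N. cnj (v i) * ?X $$ (i,j) * v j)" for v q
  proof -
    define v' where "v' I = (if g I then v I else 0)" for I
    define u where "u y = (\<Sum>x\<in>{x. x \<in> {..<N} \<and> f x = y}. v' x)" for y
    have inner: "(\<Sum>j<N. A$$(y, f j) * v' j) = (\<Sum>y'<m. A$$(y,y') * u y')" for y
      unfolding u_def using f by (intro sum_group_fn) auto
    have cu: "(\<Sum>i<N. cnj (v' i) * H (f i)) = (\<Sum>y<m. cnj (u y) * H y)" for H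
    proof -
      have "(\<Sum>i<N. cnj (v' i) * H (f i)) = (\<Sum>i<N. H (f i) * cnj (v' i))" by (simp add: mult.commute)
      also have "\<dots> = (\<Sum>y<m. H y * (\<Sum>x\<in>{x. x \<in> {..<N} \<and> f x = y}. cnj (v' x)))"
        using f by (intro sum_group_fn) auto
      also have "\<dots> = (\<Sum>y<m. cnj (u y) * H y)" unfolding u_def by (simp add: mult.commute)
      finally show ?thesis .
    qed
    have "q = (\<Sum>i<N. cnj (v' i) * (\<Sum>j<N. A$$(f i, f j) * v' j))"
      unfolding q v'_def by (auto simp: sum_distrib_left mult.assoc intro!: sum.cong)
    also have "\<dots> = (\<Sum>i<N. cnj (v' i) * (\<Sum>y'<m. A$$(f i,y') * u y'))" by (simp add: inner)
    also have "\<dots> = (\<Sum>y<m. cnj (u y) * (\<Sum>y'<m. A$$(y,y') * u y'))" by (rule cu)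
    also have "\<dots> = (\<Sum>y<m. \<Sum>y'<m. cnj (u y) * A$$(y,y') * u y')" by (simp add: sum_distrib_left mult.assoc)
    finally have "q = (\<Sum>y<m. \<Sum>y'<m. cnj (u y) * A$$(y,y') * u y')" .
    thus ?thesis using A unfolding psd_def Let_def by blast
  qed
  thus ?thesis unfolding psd_def Let_def by simp
qed

lemma sum_split: "(\<Sum>r<a*b. f r) = (\<Sum>c<a. \<Sum>x<b. f (c*b+x))" for f :: "nat \<Rightarrow> 'a::comm_monoid_add"
proof (induction a)
  case 0 then show ?case by simp
next
  case (Suc a)
  have "(\<Sum>r<Suc a*b. f r) = (\<Sum>r<a*b. f r) + (\<Sum>r\<in>{a*b..<a*b+b}. f r)"
    by (simp add: sum.atLeastLessThan_concat[symmetric] lessThan_atLeast0 add.commute)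
  also have "(\<Sum>r\<in>{a*b..<a*b+b}. f r) = (\<Sum>x<b. f (a*b+x))"
    using sum.shift_bounds_nat_ivl[of f 0 "a*b" b] by (simp add: lessThan_atLeast0 add.commute)
  finally show ?case using Suc by simp
qed

lemma dm1[simp]: "x < (d::nat) \<Longrightarrow> (a*d+x) div d = a" by simp
lemma dm2[simp]: "x < (d::nat) \<Longrightarrow> (a*d+x) mod d = x" by simp

definition Zf :: "(complex mat \<Rightarrow> complex mat) \<Rightarrow> complex mat \<Rightarrow> nat \<Rightarrow> nat \<Rightarrow> nat \<Rightarrow> nat \<Rightarrow> nat \<Rightarrow> complex" where
  "Zf P \<pi> d a b i j = (\<Sum>x<d. \<Sum>x'<d. \<pi>$$(x,x') * P (unit (2*d) (a*d+x) (b*d+x')) $$ (i,j))"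

lemma chan_Z:
  assumes P: "CPTP (2*d) 2 P" and pi: "\<pi> \<in> carrier_mat d d" and r: "\<rho> \<in> carrier_mat 2 2"
    and i: "i < 2" and j: "j < 2"
  shows "P (kron \<rho> \<pi>) $$ (i,j) = (\<Sum>a<2. \<Sum>b<2. \<rho>$$(a,b) * Zf P \<pi> d a b i j)"
proof -
  have K: "kron \<rho> \<pi> \<in> carrier_mat (2*d) (2*d)" using pi r unfolding kron_def by simp
  have "P (kron \<rho> \<pi>) $$ (i,j) = (\<Sum>p<2*d. \<Sum>q<2*d. kron \<rho> \<pi> $$(p,q) * P (unit (2*d) p q) $$ (i,j))"
    by (rule P_entry[OF P K i j])
  also have "\<dots> = (\<Sum>a<2. \<Sum>x<d. \<Sum>b<2. \<Sum>x'<d. kron \<rho> \<pi> $$(a*d+x,b*d+x') * P (unit (2*d) (a*d+x) (b*d+x')) $$ (i,j))"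
    by (simp add: sum_split)
  also have "\<dots> = (\<Sum>a<2. \<Sum>x<d. \<Sum>b<2. \<Sum>x'<d. \<rho>$$(a,b) * (\<pi>$$(x,x') * P (unit (2*d) (a*d+x) (b*d+x')) $$ (i,j)))"
  proof (intro sum.cong refl)
    fix a x b x' :: nat assume "a \<in> {..<2}" "x \<in> {..<d}" "b \<in> {..<2}" "x' \<in> {..<d}"
    hence "a*d+x < 2*d" "b*d+x' < 2*d" "x < d" "x' < d" by (auto simp: less2)
    thus "kron \<rho> \<pi> $$(a*d+x,b*d+x') * P (unit (2*d) (a*d+x) (b*d+x')) $$ (i,j) = \<rho>$$(a,b) * (\<pi>$$(x,x') * P (unit (2*d) (a*d+x) (b*d+x')) $$ (i,j))"
      unfolding kron_def using pi r by simp
  qed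
  also have "\<dots> = (\<Sum>a<2. \<Sum>b<2. \<rho>$$(a,b) * Zf P \<pi> d a b i j)"
    unfolding Zf_def sum_distrib_left by (simp add: sum.swap[of _ "{..<d}" "{..<2}"])
  finally show ?thesis .
qed

lemma sq2c: "complex_of_real (sqrt 2) * complex_of_real (sqrt 2) = 2"
  by (simp flip: of_real_mult)

lemma psd2I:
  assumes "A \<in> carrier_mat 2 2" and "\<And>v. \<exists>u. (\<Sum>i<2. \<Sum>j<2. cnj (v i) * A $$ (i,j) * v j) = cnj u * u / 2"
  shows "psd 2 A"
proof -
  have "Im (cnj u * u / 2) = 0 \<and> 0 \<le> Re (cnj u * u / 2)" for u :: complex
  proof -
    have "cnj u * u = complex_of_real ((cmod u)^2)"
      by (subst complex_norm_square) (rule mult.commute)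
    hence "cnj u * u / 2 = complex_of_real ((cmod u)^2 / 2)" by simp
    thus ?thesis by simp
  qed
  thus ?thesis using assms unfolding psd_def Let_def by metis
qed

definition E00 :: "complex mat" where "E00 = mat 2 2 (\<lambda>(i,j). if i=0 \<and> j=0 then 1 else 0)"
definition E11 :: "complex mat" where "E11 = mat 2 2 (\<lambda>(i,j). if i=1 \<and> j=1 then 1 else 0)"
definition Rp :: "complex mat" where "Rp = mat 2 2 (\<lambda>(i,j). 1/2)"
definition Ri :: "complex mat" where "Ri = mat 2 2 (\<lambda>(i,j). if i=j then 1/2 else if i=0 then -\<i>/2 else \<i>/2)"

lemma dens_E00: "density 2 E00"
  unfolding density_def mtrace_def
proof
  show "psd 2 E00"
  proof (rule psd2I)
    show "E00 \<in> carrier_mat 2 2" unfolding E00_def by simp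
    fix v :: "nat \<Rightarrow> complex"
    show "\<exists>u. (\<Sum>i<2. \<Sum>j<2. cnj (v i) * E00 $$ (i,j) * v j) = cnj u * u / 2"
      by (rule exI[of _ "sqrt 2 * v 0"]) (simp add: E00_def sum2 field_simps sq2c)
  qed
qed (simp add: E00_def sum2)

lemma dens_E11: "density 2 E11"
  unfolding density_def mtrace_def
proof
  show "psd 2 E11"
  proof (rule psd2I)
    show "E11 \<in> carrier_mat 2 2" unfolding E11_def by simp
    fix v :: "nat \<Rightarrow> complex"
    show "\<exists>u. (\<Sum>i<2. \<Sum>j<2. cnj (v i) * E11 $$ (i,j) * v j) = cnj u * u / 2"
      by (rule exI[of _ "sqrt 2 * v 1"]) (simp add: E11_def sum2 field_simps sq2c)
  qed
qed (simp add: E11_def sum2)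

lemma dens_Rp: "density 2 Rp"
  unfolding density_def mtrace_def
proof
  show "psd 2 Rp"
  proof (rule psd2I)
    show "Rp \<in> carrier_mat 2 2" unfolding Rp_def by simp
    fix v :: "nat \<Rightarrow> complex"
    show "\<exists>u. (\<Sum>i<2. \<Sum>j<2. cnj (v i) * Rp $$ (i,j) * v j) = cnj u * u / 2"
      by (rule exI[of _ "v 0 + v 1"]) (simp add: Rp_def sum2 field_simps)
  qed
qed (simp add: Rp_def sum2)

lemma dens_Ri: "density 2 Ri"
  unfolding density_def mtrace_def
proof
  show "psd 2 Ri"
  proof (rule psd2I)
    show "Ri \<in> carrier_mat 2 2" unfolding Ri_def by simp
    fix v :: "nat \<Rightarrow> complex"
    show "\<exists>u. (\<Sum>i<2. \<Sum>j<2. cnj (v i) * Ri $$ (i,j) * v j) = cnj u * u / 2"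
      by (rule exI[of _ "v 0 - \<i> * v 1"]) (simp add: Ri_def sum2 field_simps)
  qed
qed (simp add: Ri_def sum2)

lemma Z_vals:
  assumes g: "\<gamma> \<ge> 0" and P: "CPTP (2*d) 2 P" and pi: "\<pi> \<in> carrier_mat d d"
    and ch: "\<forall>\<rho>. density 2 \<rho> \<longrightarrow> P (kron \<rho> \<pi>) = amp_damp_semigroup \<gamma> t \<rho>"
  shows "Zf P \<pi> d 0 0 1 1 = 0" "Zf P \<pi> d 0 0 0 0 = 1" "Zf P \<pi> d 1 1 1 1 = of_real (exp (-\<gamma>*t))"
    "Zf P \<pi> d 0 1 0 1 = of_real (exp (-\<gamma>*t/2))" "Zf P \<pi> d 1 0 1 0 = of_real (exp (-\<gamma>*t/2))"
proof -
  define Z where "Z = Zf P \<pi> d"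
  have eq: "amp_damp_semigroup \<gamma> t \<rho> $$ (i,j) = \<rho>$$(0,0) * Z 0 0 i j + \<rho>$$(0,1) * Z 0 1 i j
      + \<rho>$$(1,0) * Z 1 0 i j + \<rho>$$(1,1) * Z 1 1 i j"
    if "density 2 \<rho>" "i < 2" "j < 2" for \<rho> i j
  proof -
    have c: "\<rho> \<in> carrier_mat 2 2" using that unfolding density_def psd_def by blast
    have "amp_damp_semigroup \<gamma> t \<rho> $$ (i,j) = P (kron \<rho> \<pi>) $$ (i,j)" using ch that by simp
    also have "\<dots> = (\<Sum>a<2. \<Sum>b<2. \<rho>$$(a,b) * Zf P \<pi> d a b i j)" by (rule chan_Z[OF P pi c that(2,3)])
    finally show ?thesis unfolding Z_def by (simp add: sum2 add.assoc)
  qed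
  have T: "amp_damp_semigroup \<gamma> t \<rho> $$ (i,j) = (if i=0 \<and> j=0 then \<rho>$$(0,0) + \<rho>$$(1,1) - of_real (exp (-\<gamma>*t)) * \<rho>$$(1,1)
     else if i=1 \<and> j=1 then of_real (exp (-\<gamma>*t)) * \<rho>$$(1,1)
     else of_real (exp (-\<gamma>*t/2)) * \<rho>$$(i,j))" if "\<rho> \<in> carrier_mat 2 2" "i < 2" "j < 2" for \<rho> i j
    unfolding semigroup_formula[OF g that(1)] using that(2,3) by simp
  define e where "e = complex_of_real (exp (-\<gamma>*t))"
  define s where "s = complex_of_real (exp (-\<gamma>*t/2))"
  have cE00: "E00 \<in> carrier_mat 2 2" and cE11: "E11 \<in> carrier_mat 2 2" and cRp: "Rp \<in> carrier_mat 2 2"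
    and cRi: "Ri \<in> carrier_mat 2 2" by (auto simp: E00_def E11_def Rp_def Ri_def)
  have a1: "Z 0 0 1 1 = 0" using eq[OF dens_E00, of 1 1] T[OF cE00, of 1 1] by (simp add: E00_def)
  have a2: "Z 0 0 0 0 = 1" using eq[OF dens_E00, of 0 0] T[OF cE00, of 0 0] by (simp add: E00_def)
  have a3: "Z 1 1 1 1 = e" using eq[OF dens_E11, of 1 1] T[OF cE11, of 1 1] by (simp add: E11_def e_def)
  have b1: "Z 0 0 0 1 = 0" using eq[OF dens_E00, of 0 1] T[OF cE00, of 0 1] by (simp add: E00_def)
  have b2: "Z 1 1 0 1 = 0" using eq[OF dens_E11, of 0 1] T[OF cE11, of 0 1] by (simp add: E11_def)
  have b3: "Z 0 0 1 0 = 0" using eq[OF dens_E00, of 1 0] T[OF cE00, of 1 0] by (simp add: E00_def)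
  have b4: "Z 1 1 1 0 = 0" using eq[OF dens_E11, of 1 0] T[OF cE11, of 1 0] by (simp add: E11_def)
  have p1: "Z 0 1 0 1 + Z 1 0 0 1 = s"
    using eq[OF dens_Rp, of 0 1] T[OF cRp, of 0 1] b1 b2 by (simp add: Rp_def s_def field_simps)
  have p2: "Z 0 1 1 0 + Z 1 0 1 0 = s"
    using eq[OF dens_Rp, of 1 0] T[OF cRp, of 1 0] b3 b4 by (simp add: Rp_def s_def field_simps)
  have q1: "Z 0 1 0 1 - Z 1 0 0 1 = s"
  proof -
    have "-\<i>/2 * Z 0 1 0 1 + \<i>/2 * Z 1 0 0 1 = s * (-\<i>/2)"
      using eq[OF dens_Ri, of 0 1] T[OF cRi, of 0 1] b1 b2 by (simp add: Ri_def s_def)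
    hence "\<i> * (Z 0 1 0 1 - Z 1 0 0 1) = \<i> * s" by (simp add: field_simps)
    thus ?thesis by simp
  qed
  have q2: "Z 1 0 1 0 - Z 0 1 1 0 = s"
  proof -
    have "-\<i>/2 * Z 0 1 1 0 + \<i>/2 * Z 1 0 1 0 = s * (\<i>/2)"
      using eq[OF dens_Ri, of 1 0] T[OF cRi, of 1 0] b3 b4 by (simp add: Ri_def s_def)
    note h = this
    have "Z 1 0 1 0 - Z 0 1 1 0 = (2/\<i>) * (-\<i>/2 * Z 0 1 1 0 + \<i>/2 * Z 1 0 1 0)" by (simp add: field_simps)
    also have "\<dots> = (2/\<i>) * (s * (\<i>/2))" using h by simp
    also have "\<dots> = s" by (simp add: field_simps)
    finally show ?thesis .
  qed
  have "Z 0 1 0 1 = s" using p1 q1 by (simp add: field_simps)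
  moreover have "Z 1 0 1 0 = s" using p2 q2 by (simp add: field_simps)
  ultimately show "Zf P \<pi> d 0 0 1 1 = 0" "Zf P \<pi> d 0 0 0 0 = 1" "Zf P \<pi> d 1 1 1 1 = of_real (exp (-\<gamma>*t))"
    "Zf P \<pi> d 0 1 0 1 = of_real (exp (-\<gamma>*t/2))" "Zf P \<pi> d 1 0 1 0 = of_real (exp (-\<gamma>*t/2))"
    using a1 a2 a3 unfolding Z_def s_def e_def by auto
qed

lemma idx_lt: "(a::nat) < A \<Longrightarrow> p < n \<Longrightarrow> a*n + p < A*n"
proof -
  assume a: "a < A" and p: "p < n"
  have "(a+1)*n \<le> A*n" using a by (intro mult_right_mono) auto
  thus ?thesis using p by simp
qed

definition Xm :: "complex mat \<Rightarrow> nat \<Rightarrow> complex mat" where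
  "Xm \<pi> d = mat (d*(2*d)*(2*d)) (d*(2*d)*(2*d)) (\<lambda>(I,J).
     if I mod (2*d) = (I div (2*d)) mod (2*d) \<and> J mod (2*d) = (J div (2*d)) mod (2*d)
     then \<pi>$$(I div (2*d) div (2*d), J div (2*d) div (2*d)) else 0)"

definition Om :: "(complex mat \<Rightarrow> complex mat) \<Rightarrow> complex mat \<Rightarrow> nat \<Rightarrow> complex mat" where
  "Om P \<pi> d = ampliate (d*(2*d)) (2*d) 2 P (Xm \<pi> d)"

definition wv :: "nat \<Rightarrow> (nat \<Rightarrow> nat \<Rightarrow> complex) \<Rightarrow> nat \<Rightarrow> complex" where
  "wv d h I = (if I div 2 div (2*d) = (I div 2 mod (2*d)) mod d then h ((I div 2 mod (2*d)) div d) (I mod 2) else 0)"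

lemma Xm_psd: assumes "psd d \<pi>" shows "psd (d*(2*d)*(2*d)) (Xm \<pi> d)"
  unfolding Xm_def
proof (rule psd_compress[OF assms])
  fix I assume "I < d*(2*d)*(2*d)"
  thus "I div (2*d) div (2*d) < d" by (simp add: less_mult_imp_div_less)
qed

lemma Om_psd: assumes P: "CPTP (2*d) 2 P" and pi: "psd d \<pi>" shows "psd (d*(2*d)*2) (Om P \<pi> d)"
  unfolding Om_def by (rule CPTP_D(5)[OF P Xm_psd[OF pi]])

lemma Om_entry:
  assumes P: "CPTP (2*d) 2 P" and I: "I < d*(2*d)*2" and J: "J < d*(2*d)*2"
  shows "Om P \<pi> d $$ (I,J) = \<pi>$$(I div 2 div (2*d), J div 2 div (2*d)) *
     P (unit (2*d) (I div 2 mod (2*d)) (J div 2 mod (2*d))) $$ (I mod 2, J mod 2)"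
proof -
  let ?n = "2*d"
  have Id: "I div 2 < d*?n" "J div 2 < d*?n" using I J by (auto simp: less_mult_imp_div_less)
  have blk: "mat ?n ?n (\<lambda>(p,q). Xm \<pi> d $$ ((I div 2)*?n + p, (J div 2)*?n + q)) =
     \<pi>$$(I div 2 div ?n, J div 2 div ?n) \<cdot>\<^sub>m unit ?n (I div 2 mod ?n) (J div 2 mod ?n)"
  proof (rule eq_matI)
    fix p q assume p: "p < dim_row (\<pi>$$(I div 2 div ?n, J div 2 div ?n) \<cdot>\<^sub>m unit ?n (I div 2 mod ?n) (J div 2 mod ?n))"
      and q: "q < dim_col (\<pi>$$(I div 2 div ?n, J div 2 div ?n) \<cdot>\<^sub>m unit ?n (I div 2 mod ?n) (J div 2 mod ?n))"
    hence pq: "p < ?n" "q < ?n" by (auto simp: unit_def)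
    have b1: "(I div 2)*?n + p < d*?n*?n" "(J div 2)*?n + q < d*?n*?n"
      using idx_lt[OF Id(1) pq(1)] idx_lt[OF Id(2) pq(2)] by auto
    show "mat ?n ?n (\<lambda>(p,q). Xm \<pi> d $$ ((I div 2)*?n + p, (J div 2)*?n + q)) $$ (p,q) =
      (\<pi>$$(I div 2 div ?n, J div 2 div ?n) \<cdot>\<^sub>m unit ?n (I div 2 mod ?n) (J div 2 mod ?n)) $$ (p,q)"
      using pq b1 unfolding Xm_def unit_def by auto
  qed auto
  have "Om P \<pi> d $$ (I,J) = P (mat ?n ?n (\<lambda>(p,q). Xm \<pi> d $$ ((I div 2)*?n + p, (J div 2)*?n + q))) $$ (I mod 2, J mod 2)"
    unfolding Om_def ampliate_def using I J by simp
  also have "\<dots> = (\<pi>$$(I div 2 div ?n, J div 2 div ?n) \<cdot>\<^sub>m P (unit ?n (I div 2 mod ?n) (J div 2 mod ?n))) $$ (I mod 2, J mod 2)"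
    unfolding blk by (subst CPTP_D(3)[OF P]) auto
  also have "\<dots> = \<pi>$$(I div 2 div ?n, J div 2 div ?n) * P (unit ?n (I div 2 mod ?n) (J div 2 mod ?n)) $$ (I mod 2, J mod 2)"
    using CPTP_D(1)[OF P, of "unit ?n (I div 2 mod ?n) (J div 2 mod ?n)"] by simp
  finally show ?thesis .
qed

lemma collapse:
  fixes F :: "nat \<Rightarrow> nat \<Rightarrow> nat \<Rightarrow> nat \<Rightarrow> complex"
  shows "(\<Sum>y<d. \<Sum>b<(2::nat). \<Sum>x<d. \<Sum>j<(2::nat). (if y = x then F y b x j else 0)) = (\<Sum>b<2. \<Sum>x<d. \<Sum>j<2. F x b x j)"
proof -
  have "(\<Sum>y<d. \<Sum>b<(2::nat). \<Sum>x<d. \<Sum>j<(2::nat). (if y = x then F y b x j else 0))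
      = (\<Sum>b<(2::nat). \<Sum>y<d. \<Sum>x<d. \<Sum>j<(2::nat). (if y = x then F y b x j else 0))"
    by (rule sum.swap)
  also have "\<dots> = (\<Sum>b<(2::nat). \<Sum>x<d. \<Sum>y<d. \<Sum>j<(2::nat). (if y = x then F y b x j else 0))"
    by (rule sum.cong[OF refl], rule sum.swap)
  also have "\<dots> = (\<Sum>b<(2::nat). \<Sum>x<d. \<Sum>j<(2::nat). \<Sum>y<d. (if y = x then F y b x j else 0))"
    by (rule sum.cong[OF refl], rule sum.cong[OF refl], rule sum.swap)
  also have "\<dots> = (\<Sum>b<2. \<Sum>x<d. \<Sum>j<2. F x b x j)"
    by (simp add: sum.delta)
  finally show ?thesis .
qed

lemma row_formula:
  assumes P: "CPTP (2*d) 2 P" and y: "y < d" and r: "\<rho> < 2*d" and i: "i' < 2"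
  shows "(\<Sum>J<d*(2*d)*2. Om P \<pi> d $$ ((y*(2*d)+\<rho>)*2+i', J) * wv d h J)
    = (\<Sum>b<2. \<Sum>x<d. \<Sum>j<2. \<pi>$$(y,x) * P (unit (2*d) \<rho> (b*d+x)) $$ (i',j) * h b j)"
proof -
  let ?I = "(y*(2*d)+\<rho>)*2+i'"
  have I: "?I < d*(2*d)*2" using idx_lt[OF idx_lt[OF y r] i] .
  have "(\<Sum>J<d*(2*d)*2. Om P \<pi> d $$ (?I, J) * wv d h J) =
     (\<Sum>J<d*(2*d)*2. \<pi>$$(y, J div 2 div (2*d)) * P (unit (2*d) \<rho> (J div 2 mod (2*d))) $$ (i', J mod 2) * wv d h J)"
  proof (intro sum.cong refl)
    fix J assume "J \<in> {..<d*(2*d)*2}"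
    hence J: "J < d*(2*d)*2" by simp
    have e1: "?I div 2 div (2*d) = y" "?I div 2 mod (2*d) = \<rho>" "?I mod 2 = i'"
      using r i by (simp_all only: dm1 dm2)
    show "Om P \<pi> d $$ (?I, J) * wv d h J = \<pi>$$(y, J div 2 div (2*d)) * P (unit (2*d) \<rho> (J div 2 mod (2*d))) $$ (i', J mod 2) * wv d h J"
      unfolding Om_entry[OF P I J] e1 ..
  qed
  also have "\<dots> = (\<Sum>y'<d. \<Sum>b<2. \<Sum>x<d. \<Sum>j<2. (if y' = x then \<pi>$$(y,x) * P (unit (2*d) \<rho> (b*d+x)) $$ (i',j) * h b j else 0))"
    unfolding sum_split[of _ "d*(2*d)" 2] sum_split[of _ d "2*d"] sum_split[of _ 2 d]
  proof (intro sum.cong refl)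
    fix y' b x j :: nat assume "y' \<in> {..<d}" "b \<in> {..<2}" "x \<in> {..<d}" "j \<in> {..<2}"
    hence h: "y' < d" "b < 2" "x < d" "j < 2" by auto
    have r': "b*d+x < 2*d" using idx_lt[OF h(2,3)] .
    let ?J = "(y' * (2 * d) + (b * d + x)) * 2 + j"
    have e: "?J div 2 div (2*d) = y'" "?J div 2 mod (2*d) = b*d+x" "?J mod 2 = j" "(b*d+x) mod d = x" "(b*d+x) div d = b"
      using r' h by (simp_all only: dm1 dm2)
    show "\<pi>$$(y, ?J div 2 div (2*d)) * P (unit (2*d) \<rho> (?J div 2 mod (2*d))) $$ (i', ?J mod 2) * wv d h ?J
       = (if y' = x then \<pi>$$(y,x) * P (unit (2*d) \<rho> (b*d+x)) $$ (i',j) * h b j else 0)"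
      unfolding wv_def e by simp
  qed
  also have "\<dots> = (\<Sum>b<2. \<Sum>x<d. \<Sum>j<2. \<pi>$$(y,x) * P (unit (2*d) \<rho> (b*d+x)) $$ (i',j) * h b j)"
    by (rule collapse)
  finally show ?thesis .
qed

lemma qf_formula:
  assumes P: "CPTP (2*d) 2 P"
  shows "qf (d*(2*d)*2) (Om P \<pi> d) (wv d h) = (\<Sum>a<2. \<Sum>x<d. \<Sum>i<2. cnj (h a i) *
     (\<Sum>b<2. \<Sum>x'<d. \<Sum>j<2. \<pi>$$(x,x') * P (unit (2*d) (a*d+x) (b*d+x')) $$ (i,j) * h b j))"
proof -
  define R where "R I = (\<Sum>J<d*(2*d)*2. Om P \<pi> d $$ (I,J) * wv d h J)" for I
  have "qf (d*(2*d)*2) (Om P \<pi> d) (wv d h) = (\<Sum>I<d*(2*d)*2. cnj (wv d h I) * R I)"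
    unfolding qf_def R_def by (simp add: sum_distrib_left mult.assoc)
  also have "\<dots> = (\<Sum>y<d. \<Sum>a<2. \<Sum>x<d. \<Sum>i<2. (if y = x then cnj (h a i) *
     (\<Sum>b<2. \<Sum>x'<d. \<Sum>j<2. \<pi>$$(y,x') * P (unit (2*d) (a*d+x) (b*d+x')) $$ (i,j) * h b j) else 0))"
    unfolding sum_split[of _ "d*(2*d)" 2] sum_split[of _ d "2*d"] sum_split[of _ 2 d]
  proof (intro sum.cong refl)
    fix y a x i :: nat assume "y \<in> {..<d}" "a \<in> {..<2}" "x \<in> {..<d}" "i \<in> {..<2}"
    hence h: "y < d" "a < 2" "x < d" "i < 2" by auto
    have r': "a*d+x < 2*d" using idx_lt[OF h(2,3)] .
    let ?I = "(y * (2 * d) + (a * d + x)) * 2 + i"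
    have e: "?I div 2 div (2*d) = y" "?I div 2 mod (2*d) = a*d+x" "?I mod 2 = i" "(a*d+x) mod d = x" "(a*d+x) div d = a"
      using r' h by (simp_all only: dm1 dm2)
    show "cnj (wv d h ?I) * R ?I = (if y = x then cnj (h a i) *
     (\<Sum>b<2. \<Sum>x'<d. \<Sum>j<2. \<pi>$$(y,x') * P (unit (2*d) (a*d+x) (b*d+x')) $$ (i,j) * h b j) else 0)"
      unfolding R_def row_formula[OF P h(1) r' h(4)] unfolding wv_def e by simp
  qed
  also have "\<dots> = (\<Sum>a<2. \<Sum>x<d. \<Sum>i<2. cnj (h a i) *
     (\<Sum>b<2. \<Sum>x'<d. \<Sum>j<2. \<pi>$$(x,x') * P (unit (2*d) (a*d+x) (b*d+x')) $$ (i,j) * h b j))"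
    by (rule collapse)
  finally show ?thesis .
qed

lemma key:
  assumes g: "\<gamma> \<ge> 0" and P: "CPTP (2*d) 2 P" and dens: "density d \<pi>"
    and ch: "\<forall>\<rho>. density 2 \<rho> \<longrightarrow> P (kron \<rho> \<pi>) = amp_damp_semigroup \<gamma> t \<rho>"
  shows "eigenvalue (mat d d (\<lambda>(x',x). P (unit (2*d) x' (d+x)) $$ (0,1))) (complex_of_real (exp (-\<gamma>*t/2)))"
proof -
  have pp: "psd d \<pi>" and pi: "\<pi> \<in> carrier_mat d d" and tr: "mtrace \<pi> = 1"
    using dens unfolding density_def psd_def by auto
  define s where "s = complex_of_real (exp (-\<gamma>*t/2))"
  define e where "e = complex_of_real (exp (-\<gamma>*t))"
  have se: "s * s = e" unfolding s_def e_def by (simp flip: of_real_mult exp_add)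
  note Z = Z_vals[OF g P pi ch, folded s_def e_def]
  have Opsd: "psd (d*(2*d)*2) (Om P \<pi> d)" by (rule Om_psd[OF P pp])
  define h1 where "h1 a i = (if a = 0 \<and> i = 1 then 1 else (0::complex))" for a i :: nat
  define h2 where "h2 a i = (if a = 0 \<and> i = 0 then s else if a = 1 \<and> i = 1 then -1 else (0::complex))" for a i :: nat
  have q1: "qf (d*(2*d)*2) (Om P \<pi> d) (wv d h1) = Zf P \<pi> d 0 0 1 1"
    unfolding qf_formula[OF P] Zf_def by (simp add: sum2 h1_def)
  have q2: "qf (d*(2*d)*2) (Om P \<pi> d) (wv d h2) = s*s*Zf P \<pi> d 0 0 0 0 - s*Zf P \<pi> d 0 1 0 1 - s*Zf P \<pi> d 1 0 1 0 + Zf P \<pi> d 1 1 1 1"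
    unfolding qf_formula[OF P] Zf_def by (simp add: sum2 h2_def s_def sum_distrib_left sum_subtractf sum.distrib sum_negf algebra_simps)
  have q1z: "qf (d*(2*d)*2) (Om P \<pi> d) (wv d h1) = 0" using q1 Z by simp
  have q2z: "qf (d*(2*d)*2) (Om P \<pi> d) (wv d h2) = 0" using q2 Z se by simp
  have rows: "(\<Sum>J<d*(2*d)*2. Om P \<pi> d $$ ((y*(2*d)+x')*2+i', J) * wv d h J) = 0"
    if "qf (d*(2*d)*2) (Om P \<pi> d) (wv d h) = 0" "y < d" "x' < d" "i' < 2" for h y x' i'
  proof (rule psd_null[OF Opsd that(1)])
    have "x' < 2*d" using that by simp
    thus "(y*(2*d)+x')*2+i' < d*(2*d)*2" using idx_lt[OF idx_lt[OF that(2)] that(4)] by blast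
  qed
  have E1: "(\<Sum>x<d. \<pi>$$(y,x) * P (unit (2*d) x' x) $$ (1,1)) = 0" if "y < d" "x' < d" for y x'
  proof -
    have "x' < 2*d" using that by simp
    from rows[OF q1z that, of 1] row_formula[OF P that(1) this, of 1 \<pi> h1]
    show ?thesis by (simp add: sum2 h1_def)
  qed
  have E2: "(\<Sum>x<d. s * (\<pi>$$(y,x) * P (unit (2*d) x' x) $$ (0,0))) = (\<Sum>x<d. \<pi>$$(y,x) * P (unit (2*d) x' (d+x)) $$ (0,1))"
    if "y < d" "x' < d" for y x'
  proof -
    have "x' < 2*d" using that by simp
    from rows[OF q2z that, of 0] row_formula[OF P that(1) this, of 0 \<pi> h2]
    have "(\<Sum>x<d. s * (\<pi>$$(y,x) * P (unit (2*d) x' x) $$ (0,0))) + - (\<Sum>x<d. \<pi>$$(y,x) * P (unit (2*d) x' (d+x)) $$ (0,1)) = 0"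
      by (simp add: sum2 h2_def sum.distrib sum_negf algebra_simps)
    thus ?thesis by (simp add: algebra_simps)
  qed
  have TP: "P (unit (2*d) x' x) $$ (0,0) + P (unit (2*d) x' x) $$ (1,1) = (if x' = x then 1 else 0)"
    if "x' < d" "x < d" for x' x
  proof -
    have c: "P (unit (2*d) x' x) \<in> carrier_mat 2 2" by (rule CPTP_D(1)[OF P]) simp
    have "mtrace (P (unit (2*d) x' x)) = mtrace (unit (2*d) x' x)" by (rule CPTP_D(4)[OF P]) simp
    moreover have "mtrace (P (unit (2*d) x' x)) = P (unit (2*d) x' x) $$ (0,0) + P (unit (2*d) x' x) $$ (1,1)"
      unfolding mtrace_def using c by (simp add: sum2)
    moreover have "mtrace (unit (2*d) x' x) = (\<Sum>i<2*d. if i = x' then (if x' = x then 1 else 0) else 0)"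
      unfolding mtrace_def unit_def by (intro sum.cong) auto
    moreover have "\<dots> = (if x' = x then 1 else 0)" using that by simp
    ultimately show ?thesis by simp
  qed
  have eig: "(\<Sum>x<d. \<pi>$$(y,x) * P (unit (2*d) x' (d+x)) $$ (0,1)) = s * \<pi>$$(y,x')" if "y < d" "x' < d" for y x'
  proof -
    have "(\<Sum>x<d. \<pi>$$(y,x) * P (unit (2*d) x' (d+x)) $$ (0,1)) = s * (\<Sum>x<d. \<pi>$$(y,x) * P (unit (2*d) x' x) $$ (0,0))"
      using E2[OF that] by (simp add: sum_distrib_left)
    also have "(\<Sum>x<d. \<pi>$$(y,x) * P (unit (2*d) x' x) $$ (0,0)) = (\<Sum>x<d. \<pi>$$(y,x) * (if x' = x then 1 else 0) - \<pi>$$(y,x) * P (unit (2*d) x' x) $$ (1,1))"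
      by (intro sum.cong refl) (simp add: TP[OF that(2), symmetric] algebra_simps)
    also have "\<dots> = \<pi>$$(y,x')" using E1[OF that] that by (simp add: sum_subtractf ifz1)
    finally show ?thesis .
  qed
  obtain y0 where y0: "y0 < d" "\<pi>$$(y0,y0) \<noteq> 0"
  proof -
    have "(\<Sum>y<d. \<pi>$$(y,y)) = 1" using tr pi unfolding mtrace_def by simp
    hence "\<exists>y<d. \<pi>$$(y,y) \<noteq> 0" by (metis (mono_tags, lifting) lessThan_iff sum.neutral zero_neq_one)
    thus ?thesis using that by blast
  qed
  define v where "v = vec d (\<lambda>x. \<pi>$$(y0,x))"
  define M where "M = mat d d (\<lambda>(x',x). P (unit (2*d) x' (d+x)) $$ (0,1))"
  have "eigenvector M v s" unfolding eigenvector_def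
  proof (intro conjI)
    show "v \<in> carrier_vec (dim_row M)" unfolding v_def M_def by simp
    show "v \<noteq> 0\<^sub>v (dim_row M)"
    proof
      assume "v = 0\<^sub>v (dim_row M)"
      hence "v $ y0 = 0" using y0 unfolding M_def by simp
      thus False using y0 unfolding v_def by simp
    qed
    show "M *\<^sub>v v = s \<cdot>\<^sub>v v"
    proof (rule eq_vecI)
      fix x' assume "x' < dim_vec (s \<cdot>\<^sub>v v)"
      hence x': "x' < d" unfolding v_def by simp
      have "(M *\<^sub>v v) $ x' = (\<Sum>x<d. \<pi>$$(y0,x) * P (unit (2*d) x' (d+x)) $$ (0,1))"
        unfolding M_def v_def using x' by (simp add: scalar_prod_def lessThan_atLeast0 mult.commute)
      also have "\<dots> = s * \<pi>$$(y0,x')" by (rule eig[OF y0(1) x'])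
      finally show "(M *\<^sub>v v) $ x' = (s \<cdot>\<^sub>v v) $ x'" unfolding v_def using x' by simp
    qed (simp add: M_def v_def)
  qed
  thus ?thesis unfolding eigenvalue_def M_def s_def by blast
qed

theorem proposition2:
  fixes \<gamma> :: real
  assumes "\<gamma> > 0"
  shows "\<not> quantum_programmable (amp_damp_semigroup \<gamma>)"
proof
  assume "quantum_programmable (amp_damp_semigroup \<gamma>)"
  then obtain d P \<pi>f where P: "CPTP (2*d) 2 P" and dens: "\<forall>t\<ge>0. density d (\<pi>f t)"
    and ch: "\<forall>t\<ge>0. \<forall>\<rho>. density 2 \<rho> \<longrightarrow> P (kron \<rho> (\<pi>f t)) = amp_damp_semigroup \<gamma> t \<rho>"
    unfolding quantum_programmable_def by blast
  define M where "M = mat d d (\<lambda>(x',x). P (unit (2*d) x' (d+x)) $$ (0,1))"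
  have Mc: "M \<in> carrier_mat d d" unfolding M_def by simp
  have g: "\<gamma> \<ge> 0" using assms by simp
  define f where "f t = complex_of_real (exp (-\<gamma>*t/2))" for t
  have roots: "f t \<in> {z. poly (char_poly M) z = 0}" if "t \<ge> 0" for t
  proof -
    have "eigenvalue M (f t)" unfolding M_def f_def
      by (rule key[OF g P]) (use dens ch that in auto)
    thus ?thesis using eigenvalue_root_char_poly[OF Mc] by simp
  qed
  have nz: "char_poly M \<noteq> 0" using degree_monic_char_poly[OF Mc] by auto
  have fin: "finite (f ` {0..})"
    by (rule finite_subset[OF _ poly_roots_finite[OF nz]]) (use roots in auto)
  have inj: "inj_on f {0..}"
  proof (rule inj_onI)
    fix a b assume "f a = f b"
    hence "exp (-\<gamma>*a/2) = exp (-\<gamma>*b/2)" unfolding f_def by simp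
    hence "-\<gamma>*a/2 = -\<gamma>*b/2" by simp
    thus "a = b" using assms by simp
  qed
  have "finite {0::real..}" using finite_imageD[OF fin inj] .
  thus False using infinite_Ici by blast
qed
end
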